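(* Let $p\ge 1$ and $r_p(x)=\sum_{j=0}^{p}\frac{(-\mathrm{i}x)^j}{j!}$ for real $x$. Then there exists $\eta_s>0$ such that $|r_p(x)|<1$ for all $0<x<\pi\eta_s$ if and only if $p=4m$ or $p=4m-1$ for some positive integer $m$. Moreover, if $p\not\equiv 0,3 \pmod 4$, then $|r_p(x)|>1$ for all sufficiently small $x>0$. *)

theory Defs
  imports Complex_Main
begin

definition rp :: "nat \<Rightarrow> real \<Rightarrow> complex" where
  "rp p x = (\<Sum>j=0..p. (- \<i> * complex_of_real x) ^ j / of_nat (fact j))"

end

theory Submission
  imports Defs
begin

definition cc :: "nat \<Rightarrow> complex" where "cc j = (- \<i>) ^ j / of_nat (fact j)"
definition aa :: "nat \<Rightarrow> real" where "aa j = Re (cc j)"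
definition bb :: "nat \<Rightarrow> real" where "bb j = Im (cc j)"
definition AA :: "nat \<Rightarrow> real \<Rightarrow> real" where "AA p x = (\<Sum>j=0..p. aa j * x ^ j)"
definition BB :: "nat \<Rightarrow> real \<Rightarrow> real" where "BB p x = (\<Sum>j=0..p. bb j * x ^ j)"

lemma rp_eq: "rp p x = (\<Sum>j=0..p. cc j * of_real (x ^ j))"
  unfolding rp_def cc_def by (intro sum.cong refl) (metis mult_minus_left power_mult_distrib of_real_power times_divide_eq_left mult.commute)

lemma Re_rp: "Re (rp p x) = AA p x"
  unfolding rp_eq AA_def aa_def by (simp add: Re_sum)

lemma Im_rp: "Im (rp p x) = BB p x"
  unfolding rp_eq BB_def bb_def by (simp add: Im_sum)

lemma cmod_rp: "(cmod (rp p x))^2 = (AA p x)^2 + (BB p x)^2"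
  by (simp add: cmod_power2 Re_rp Im_rp)

lemma aux_div: "(a::complex) \<noteq> 0 \<Longrightarrow> w * u / (a * b) * a = w * (u / b)"
  by (simp add: field_simps)

lemma fact_Suc_c: "(of_nat (fact (Suc j)) :: complex) = of_nat (Suc j) * of_nat (fact j)"
  by (simp only: fact_Suc of_nat_mult of_nat_id id_apply)

lemma nz_Suc_c: "(of_nat (Suc j) :: complex) \<noteq> 0" by (simp only: of_nat_eq_0_iff)

lemma cc_rec: "cc (Suc j) * of_nat (Suc j) = - \<i> * cc j"
proof -
  have "cc (Suc j) * of_nat (Suc j) = (- \<i>) * (- \<i>) ^ j / (of_nat (Suc j) * of_nat (fact j)) * of_nat (Suc j)"
    unfolding cc_def fact_Suc_c by (simp only: power_Suc)
  also have "\<dots> = - \<i> * cc j" unfolding cc_def by (rule aux_div[OF nz_Suc_c])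
  finally show ?thesis .
qed

lemma aa_rec: "aa (Suc j) * real (Suc j) = bb j"
proof -
  have "Re (cc (Suc j) * of_nat (Suc j)) = Re (- \<i> * cc j)" by (simp only: cc_rec)
  thus ?thesis unfolding aa_def bb_def by simp
qed

lemma bb_rec: "bb (Suc j) * real (Suc j) = - aa j"
proof -
  have "Im (cc (Suc j) * of_nat (Suc j)) = Im (- \<i> * cc j)" by (simp only: cc_rec)
  thus ?thesis unfolding aa_def bb_def by simp
qed

lemma DERIV_AA: "DERIV (AA p) x :> (\<Sum>j<p. bb j * x ^ j)"
proof (induction p)
  case 0
  then show ?case unfolding AA_def by simp
next
  case (Suc p)
  have e: "AA (Suc p) = (\<lambda>x. AA p x + aa (Suc p) * x ^ Suc p)"
    by (rule ext) (simp add: AA_def)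
  have eq: "aa (Suc p) * (real (Suc p) * x ^ p) = bb p * x^p"
    by (simp only: mult.assoc[symmetric] aa_rec)
  have "DERIV (\<lambda>x. AA p x + aa (Suc p) * x ^ Suc p) x :>
     (\<Sum>j<p. bb j * x ^ j) + aa (Suc p) * (real (Suc p) * x ^ p)"
    by (intro DERIV_add Suc.IH DERIV_cmult) (use DERIV_pow[of "Suc p" x] in simp)
  hence "DERIV (\<lambda>x. AA p x + aa (Suc p) * x ^ Suc p) x :>
     (\<Sum>j<p. bb j * x ^ j) + bb p * x^p" by (simp only: eq)
  moreover have "(\<Sum>j<p. bb j * x ^ j) + bb p * x^p = (\<Sum>j<Suc p. bb j * x ^ j)"
    by (simp add: sum.lessThan_Suc)
  ultimately show ?case unfolding e by (simp only:)
qed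

lemma DERIV_BB: "DERIV (BB p) x :> - (\<Sum>j<p. aa j * x ^ j)"
proof (induction p)
  case 0
  then show ?case unfolding BB_def by simp
next
  case (Suc p)
  have e: "BB (Suc p) = (\<lambda>x. BB p x + bb (Suc p) * x ^ Suc p)"
    by (rule ext) (simp add: BB_def)
  have eq: "bb (Suc p) * (real (Suc p) * x ^ p) = - aa p * x^p"
    by (simp only: mult.assoc[symmetric] bb_rec)
  have "DERIV (\<lambda>x. BB p x + bb (Suc p) * x ^ Suc p) x :>
     - (\<Sum>j<p. aa j * x ^ j) + bb (Suc p) * (real (Suc p) * x ^ p)"
    by (intro DERIV_add Suc.IH DERIV_cmult) (use DERIV_pow[of "Suc p" x] in simp)
  hence "DERIV (\<lambda>x. BB p x + bb (Suc p) * x ^ Suc p) x :>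
     - (\<Sum>j<p. aa j * x ^ j) + - aa p * x^p" by (simp only: eq)
  moreover have "- (\<Sum>j<p. aa j * x ^ j) + - aa p * x^p = - (\<Sum>j<Suc p. aa j * x ^ j)"
    by (simp add: sum.lessThan_Suc)
  ultimately show ?case unfolding e by (simp only:)
qed

lemma AA_split: "(\<Sum>j<p. aa j * x ^ j) = AA p x - aa p * x ^ p"
  unfolding AA_def by (simp add: atLeast0AtMost lessThan_Suc_atMost[symmetric])

lemma BB_split: "(\<Sum>j<p. bb j * x ^ j) = BB p x - bb p * x ^ p"
  unfolding BB_def by (simp add: atLeast0AtMost lessThan_Suc_atMost[symmetric])

definition hh :: "nat \<Rightarrow> real \<Rightarrow> real" where "hh p x = (AA p x)^2 + (BB p x)^2"

lemma DERIV_hh: "DERIV (hh p) x :> 2 * x ^ p * (aa p * BB p x - bb p * AA p x)"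
proof -
  have "DERIV (hh p) x :> 2 * AA p x * (BB p x - bb p * x ^ p) + 2 * BB p x * (- (AA p x - aa p * x ^ p))"
    unfolding hh_def using DERIV_AA[of p x] DERIV_BB[of p x]
    unfolding AA_split BB_split
    by (auto intro!: derivative_eq_intros)
  moreover have "2 * AA p x * (BB p x - bb p * x ^ p) + 2 * BB p x * (- (AA p x - aa p * x ^ p))
     = 2 * x ^ p * (aa p * BB p x - bb p * AA p x)" by (simp add: algebra_simps)
  ultimately show ?thesis by simp
qed

lemma AA0: "AA p 0 = 1"
proof -
  have "AA p 0 = (\<Sum>j=0..p. if j = 0 then aa j else 0)"
    unfolding AA_def by (intro sum.cong refl) (simp add: power_0_left)
  also have "\<dots> = aa 0" by (simp add: sum.delta)
  finally show ?thesis by (simp add: aa_def cc_def)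
qed

lemma BB0: "BB p 0 = 0"
proof -
  have "BB p 0 = (\<Sum>j=0..p. if j = 0 then bb j else 0)"
    unfolding BB_def by (intro sum.cong refl) (simp add: power_0_left)
  also have "\<dots> = bb 0" by (simp add: sum.delta)
  finally show ?thesis by (simp add: bb_def cc_def)
qed

lemma hh0: "hh p 0 = 1"
  unfolding hh_def AA0 BB0 by simp

lemma cont_sign:
  fixes g :: "real \<Rightarrow> real"
  assumes "isCont g 0" "g 0 > 0"
  shows "\<exists>d>0. \<forall>x. 0 < x \<and> x < d \<longrightarrow> g x > 0"
proof -
  from assms(1) have "g \<midarrow>0\<rightarrow> g 0" by (simp add: isCont_def)
  from LIM_D[OF this assms(2)] obtain s where s: "s > 0"
    "\<forall>x. x \<noteq> 0 \<and> norm (x - 0) < s \<longrightarrow> norm (g x - g 0) < g 0" by blast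
  show ?thesis
  proof (intro exI[of _ s] conjI allI impI)
    fix x :: real assume "0 < x \<and> x < s"
    with s(2) have "\<bar>g x - g 0\<bar> < g 0" by auto
    thus "g x > 0" by linarith
  qed (use s in auto)
qed

definition Bq :: "nat \<Rightarrow> real \<Rightarrow> real" where "Bq p x = (\<Sum>j<p. bb (Suc j) * x ^ j)"

lemma BB_Bq: "BB p x = x * Bq p x"
proof (cases p)
  case 0
  then show ?thesis by (simp add: BB_def Bq_def bb_def cc_def)
next
  case (Suc q)
  have "BB p x = bb 0 * x ^ 0 + (\<Sum>j=0..q. bb (Suc j) * x ^ Suc j)"
    unfolding BB_def Suc by (subst sum.atLeast0_atMost_Suc_shift) simp
  also have "\<dots> = (\<Sum>j=0..q. x * (bb (Suc j) * x ^ j))"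
    by (simp add: bb_def cc_def algebra_simps)
  also have "\<dots> = x * Bq p x"
    unfolding Bq_def Suc by (simp add: sum_distrib_left atLeast0AtMost lessThan_Suc_atMost)
  finally show ?thesis .
qed

lemma Bq0: "p \<ge> 1 \<Longrightarrow> Bq p 0 = -1"
proof -
  assume "p \<ge> 1"
  have "Bq p 0 = (\<Sum>j<p. if j = 0 then bb (Suc j) else 0)"
    unfolding Bq_def by (intro sum.cong refl) (simp add: power_0_left)
  also have "\<dots> = bb 1" using \<open>p \<ge> 1\<close> by (simp add: sum.delta)
  finally show ?thesis by (simp add: bb_def cc_def)
qed

lemma signs:
  assumes "p \<ge> 1"
  shows "\<exists>d>0. \<forall>x. 0 < x \<and> x < d \<longrightarrow> AA p x > 0 \<and> BB p x < 0"
proof -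
  have c1: "isCont (AA p) 0" by (rule DERIV_isCont[OF DERIV_AA])
  obtain d1 where d1: "d1 > 0" "\<forall>x. 0 < x \<and> x < d1 \<longrightarrow> AA p x > 0"
    using cont_sign[OF c1] AA0[of p] by auto
  have c2: "isCont (\<lambda>x. - Bq p x) 0" unfolding Bq_def by (intro continuous_intros)
  obtain d2 where d2: "d2 > 0" "\<forall>x. 0 < x \<and> x < d2 \<longrightarrow> - Bq p x > 0"
    using cont_sign[OF c2] Bq0[OF assms] by auto
  show ?thesis
  proof (intro exI[of _ "min d1 d2"] conjI allI impI)
    fix x assume x: "0 < x \<and> x < min d1 d2"
    show "AA p x > 0" using d1 x by auto
    have "Bq p x < 0" using d2 x by fastforce
    thus "BB p x < 0" using x BB_Bq[of p x] by (simp add: mult_pos_neg)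
  qed (use d1 d2 in auto)
qed

lemma cc_mod: "cc p = (- \<i>) ^ (p mod 4) / of_nat (fact p)"
proof -
  have "(- \<i>) ^ p = (- \<i>) ^ (4 * (p div 4) + p mod 4)"
    by (simp only: mult_div_mod_eq)
  also have "\<dots> = ((- \<i>) ^ 4) ^ (p div 4) * (- \<i>) ^ (p mod 4)"
    by (simp only: power_add power_mult)
  also have "(- \<i>) ^ 4 = (1::complex)" by (simp add: power4_eq_xxxx)
  finally show ?thesis by (simp add: cc_def)
qed

lemma dec_lemma:
  assumes "d > 0" "\<forall>t. 0 < t \<and> t < d \<longrightarrow> 2 * t ^ p * (aa p * BB p t - bb p * AA p t) < 0"
    "0 < x" "x < d"
  shows "cmod (rp p x) < 1"
proof -
  have "\<exists>z>0. z < x \<and> hh p x - hh p 0 = (x - 0) * (2 * z ^ p * (aa p * BB p z - bb p * AA p z))"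
    by (rule MVT2) (use assms(3) DERIV_hh in auto)
  then obtain z where z: "0 < z" "z < x" "hh p x - hh p 0 = (x - 0) * (2 * z ^ p * (aa p * BB p z - bb p * AA p z))"
    by blast
  have D: "2 * z ^ p * (aa p * BB p z - bb p * AA p z) < 0"
    by (rule assms(2)[rule_format]) (use z(1,2) assms(4) in linarith)
  have "(x - 0) * (2 * z ^ p * (aa p * BB p z - bb p * AA p z)) < 0"
    using mult_pos_neg[OF assms(3) D] by (simp only: diff_zero)
  hence "hh p x < 1" using z hh0[of p] by linarith
  hence "(cmod (rp p x))^2 < 1" by (simp add: cmod_rp hh_def)
  thus ?thesis by (metis not_less one_le_power)
qed

lemma inc_lemma:
  assumes "d > 0" "\<forall>t. 0 < t \<and> t < d \<longrightarrow> 2 * t ^ p * (aa p * BB p t - bb p * AA p t) > 0"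
    "0 < x" "x < d"
  shows "cmod (rp p x) > 1"
proof -
  have "\<exists>z>0. z < x \<and> hh p x - hh p 0 = (x - 0) * (2 * z ^ p * (aa p * BB p z - bb p * AA p z))"
    by (rule MVT2) (use assms(3) DERIV_hh in auto)
  then obtain z where z: "0 < z" "z < x" "hh p x - hh p 0 = (x - 0) * (2 * z ^ p * (aa p * BB p z - bb p * AA p z))"
    by blast
  have D: "2 * z ^ p * (aa p * BB p z - bb p * AA p z) > 0"
    by (rule assms(2)[rule_format]) (use z(1,2) assms(4) in linarith)
  have "(x - 0) * (2 * z ^ p * (aa p * BB p z - bb p * AA p z)) > 0"
    using mult_pos_pos[OF assms(3) D] by (simp only: diff_zero)
  hence "hh p x > 1" using z hh0[of p] by linarith
  have "(cmod (rp p x))^2 > 1" using \<open>hh p x > 1\<close> by (simp add: cmod_rp hh_def)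
  show ?thesis
  proof (rule ccontr)
    assume "\<not> ?thesis"
    hence "cmod (rp p x) \<le> 1" by simp
    hence "(cmod (rp p x))^2 \<le> 1" by (intro power_le_one) auto
    thus False using \<open>(cmod (rp p x))^2 > 1\<close> by simp
  qed
qed

lemma ab_vals:
  "p mod 4 = 0 \<Longrightarrow> aa p = 1 / real (fact p) \<and> bb p = 0"
  "p mod 4 = 1 \<Longrightarrow> aa p = 0 \<and> bb p = - 1 / real (fact p)"
  "p mod 4 = 2 \<Longrightarrow> aa p = - 1 / real (fact p) \<and> bb p = 0"
  "p mod 4 = 3 \<Longrightarrow> aa p = 0 \<and> bb p = 1 / real (fact p)"
  by (simp_all add: aa_def bb_def cc_mod power3_eq_cube Re_divide Im_divide power2_eq_square)

lemma case03:
  assumes "p \<ge> 1" "p mod 4 = 0 \<or> p mod 4 = 3"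
  shows "\<exists>d>0. \<forall>x. 0 < x \<and> x < d \<longrightarrow> cmod (rp p x) < 1"
proof -
  obtain d where d: "d > 0" "\<forall>x. 0 < x \<and> x < d \<longrightarrow> AA p x > 0 \<and> BB p x < 0"
    using signs[OF assms(1)] by blast
  have F: "real (fact p) > 0" by simp
  have "\<forall>t. 0 < t \<and> t < d \<longrightarrow> 2 * t ^ p * (aa p * BB p t - bb p * AA p t) < 0"
  proof (intro allI impI)
    fix t assume t: "0 < t \<and> t < d"
    have tp: "2 * t ^ p > 0" using t by simp
    have "aa p * BB p t - bb p * AA p t < 0"
      using assms(2) ab_vals[of p] d(2)[rule_format, OF t] F by (auto simp: divide_neg_pos divide_pos_pos)
    thus "2 * t ^ p * (aa p * BB p t - bb p * AA p t) < 0" using tp by (simp add: mult_pos_neg)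
  qed
  thus ?thesis using dec_lemma d(1) by blast
qed

lemma case12:
  assumes "p \<ge> 1" "p mod 4 = 1 \<or> p mod 4 = 2"
  shows "\<exists>d>0. \<forall>x. 0 < x \<and> x < d \<longrightarrow> cmod (rp p x) > 1"
proof -
  obtain d where d: "d > 0" "\<forall>x. 0 < x \<and> x < d \<longrightarrow> AA p x > 0 \<and> BB p x < 0"
    using signs[OF assms(1)] by blast
  have F: "real (fact p) > 0" by simp
  have "\<forall>t. 0 < t \<and> t < d \<longrightarrow> 2 * t ^ p * (aa p * BB p t - bb p * AA p t) > 0"
  proof (intro allI impI)
    fix t assume t: "0 < t \<and> t < d"
    have tp: "2 * t ^ p > 0" using t by simp
    have "aa p * BB p t - bb p * AA p t > 0"
      using assms(2) ab_vals[of p] d(2)[rule_format, OF t] F by (auto simp: divide_neg_pos divide_pos_pos)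
    thus "2 * t ^ p * (aa p * BB p t - bb p * AA p t) > 0" using tp by simp
  qed
  thus ?thesis using inc_lemma d(1) by blast
qed

theorem mainTheorem3:
  fixes p :: nat
  assumes "p \<ge> 1"
  shows "((\<exists>\<eta>::real. \<eta> > 0 \<and> (\<forall>x::real. 0 < x \<and> x < pi * \<eta> \<longrightarrow> cmod (rp p x) < 1))
           \<longleftrightarrow> (\<exists>m::nat. m \<ge> 1 \<and> (p = 4 * m \<or> p = 4 * m - 1)))
         \<and> (p mod 4 \<noteq> 0 \<and> p mod 4 \<noteq> 3 \<longrightarrow>
              (\<exists>\<delta>::real. \<delta> > 0 \<and> (\<forall>x::real. 0 < x \<and> x < \<delta> \<longrightarrow> cmod (rp p x) > 1)))"
proof -
  have R: "(\<exists>m::nat. m \<ge> 1 \<and> (p = 4 * m \<or> p = 4 * m - 1)) \<longleftrightarrow> (p mod 4 = 0 \<or> p mod 4 = 3)"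
    using assms by presburger
  have m4: "p mod 4 < 4" by simp
  show ?thesis
  proof (cases "p mod 4 = 0 \<or> p mod 4 = 3")
    case True
    obtain d where d: "d > 0" "\<forall>x. 0 < x \<and> x < d \<longrightarrow> cmod (rp p x) < 1"
      using case03[OF assms True] by blast
    have "\<exists>\<eta>::real. \<eta> > 0 \<and> (\<forall>x::real. 0 < x \<and> x < pi * \<eta> \<longrightarrow> cmod (rp p x) < 1)"
      by (rule exI[of _ "d / pi"]) (use d pi_gt_zero in auto)
    then show ?thesis using True R by auto
  next
    case False
    hence F: "p mod 4 = 1 \<or> p mod 4 = 2" using m4 by linarith
    obtain d where d: "d > 0" "\<forall>x. 0 < x \<and> x < d \<longrightarrow> cmod (rp p x) > 1"
      using case12[OF assms F] by blast
    have "\<not> (\<exists>\<eta>::real. \<eta> > 0 \<and> (\<forall>x::real. 0 < x \<and> x < pi * \<eta> \<longrightarrow> cmod (rp p x) < 1))"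
    proof
      assume "\<exists>\<eta>::real. \<eta> > 0 \<and> (\<forall>x::real. 0 < x \<and> x < pi * \<eta> \<longrightarrow> cmod (rp p x) < 1)"
      then obtain \<eta> where e: "\<eta> > 0" "\<forall>x::real. 0 < x \<and> x < pi * \<eta> \<longrightarrow> cmod (rp p x) < 1" by blast
      define x where "x = min d (pi * \<eta>) / 2"
      have pe: "pi * \<eta> > 0" using e(1) by simp
      have "0 < x" "x < d" "x < pi * \<eta>" using pe d(1) unfolding x_def by auto
      thus False using d(2) e(2) by force
    qed
    then show ?thesis using False R d by auto
  qed
qed

end
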